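(* The function $S$ is monotonically increasing on $[1,n]$: for $1\leq t'<t\leq n$ we have $S(t')\leq S(t)$. Moreover, if $S(t')>0$ for some $t'\in[1,n]$, then $S(t')<S(t)$ for all $t\in(t',n]$, i.e. $S$ is strictly increasing on $[t',n]$.
   Context: Let $G$ be a simple graph with vertex set $V=\{1,\dots,n\}$, edge set $E$ and adjacency matrix $A$. Let $e$ be the all-ones vector, $\langle M,N\rangle=\operatorname{trace}(M^TN)$, and $X\geq 0$ mean entrywise nonnegativity. For real $t$ with $1\leq t\leq n$, $Q(t)$ is the semidefinite program $$\min \tfrac12\langle A,X\rangle\ \text{ s.t. } X\succeq 0,\ X\geq 0,\ \operatorname{trace}(X)=t,\ Xe=t\operatorname{diag}(X)$$ over symmetric $n\times n$ matrices $X$, and $S(t)$ denotes its optimal value. *)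

theory Defs
  imports "HOL-Analysis.Analysis"
begin

definition simple_graph :: "('n \<Rightarrow> 'n \<Rightarrow> bool) \<Rightarrow> bool" where
  "simple_graph E \<longleftrightarrow> (\<forall>i j. E i j \<longleftrightarrow> E j i) \<and> (\<forall>i. \<not> E i i)"

definition adj_matrix :: "('n::finite \<Rightarrow> 'n \<Rightarrow> bool) \<Rightarrow> real^'n^'n" where
  "adj_matrix E = (\<chi> i j. if E i j then 1 else 0)"

definition frob :: "real^'n::finite^'n \<Rightarrow> real^'n^'n \<Rightarrow> real" where
  "frob M N = trace (transpose M ** N)"

definition psd :: "real^'n::finite^'n \<Rightarrow> bool" where
  "psd X \<longleftrightarrow> transpose X = X \<and> (\<forall>x. 0 \<le> x \<bullet> (X *v x))"

definition diag_vec :: "real^'n::finite^'n \<Rightarrow> real^'n" where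
  "diag_vec X = (\<chi> i. X $ i $ i)"

definition ones_vec :: "real^'n::finite" where
  "ones_vec = (\<chi> i. 1)"

definition Q_feasible :: "real \<Rightarrow> real^'n::finite^'n \<Rightarrow> bool" where
  "Q_feasible t X \<longleftrightarrow> transpose X = X \<and> psd X \<and> (\<forall>i j. 0 \<le> X $ i $ j)
     \<and> trace X = t \<and> X *v ones_vec = t *\<^sub>R diag_vec X"

definition S_val :: "('n::finite \<Rightarrow> 'n \<Rightarrow> bool) \<Rightarrow> real \<Rightarrow> real" where
  "S_val E t = Inf {frob (adj_matrix E) X / 2 | X. Q_feasible t X}"

end

theory Submission
  imports Defs
begin

lemma mult_if0: "(a::real) * (if P then b else 0) = (if P then a * b else 0)"
  by simp

lemma frob_eq: "frob M N = (\<Sum>i\<in>UNIV. \<Sum>j\<in>UNIV. M$i$j * N$i$j)"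
  unfolding frob_def trace_def matrix_matrix_mult_def transpose_def
  apply simp
  apply (rule sum.swap)
  done

lemma frob_adj_nonneg:
  assumes "\<forall>i j. 0 \<le> X $ i $ j"
  shows "0 \<le> frob (adj_matrix E) X"
  unfolding frob_eq adj_matrix_def using assms
  by (auto intro!: sum_nonneg)

lemma shrink:
  fixes X :: "real^'n::finite^'n"
  assumes sg: "simple_graph E" and feas: "Q_feasible t X" and t1: "1 \<le> t'" and tt: "t' < t"
  defines "l \<equiv> t' * (t' - 1) / (t * (t - 1))"
  shows "\<exists>Y. Q_feasible t' Y \<and> frob (adj_matrix E) Y = l * frob (adj_matrix E) X"
proof -
  define m where "m = t' * (t - t') / (t * (t - 1))"
  have tp: "t > 1" using t1 tt by linarith
  have nz: "t * (t - 1) \<noteq> 0" using tp by simp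
  have l0: "0 \<le> l" unfolding l_def using t1 tp by (intro divide_nonneg_pos) auto
  have m0: "0 \<le> m" unfolding m_def using t1 tt tp by (intro divide_nonneg_pos) auto
  have lm: "l + m = t' / t"
  proof -
    have "l + m = (t' * (t' - 1) + t' * (t - t')) / (t * (t - 1))"
      unfolding l_def m_def by (simp add: add_divide_distrib)
    also have "t' * (t' - 1) + t' * (t - t') = t' * (t - 1)" by (simp add: algebra_simps)
    finally show ?thesis using tp by simp
  qed
  have lm2: "l * t + m = t' * (l + m)"
  proof -
    have "l * t + m = (t' * (t' - 1) * t + t' * (t - t')) / (t * (t - 1))"
      unfolding l_def m_def by (simp add: add_divide_distrib)
    also have "t' * (t' - 1) * t + t' * (t - t') = (t' * t' / t) * (t * (t - 1))"
      using tp by (simp add: field_simps)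
    finally have "l * t + m = t' * t' / t" using nz by simp
    thus ?thesis unfolding lm by simp
  qed
  define Y :: "real^'n^'n" where "Y = (\<chi> i j. l * X$i$j + (if i = j then m * X$i$i else 0))"
  have Yij: "Y$i$j = l * X$i$j + (if i = j then m * X$i$i else 0)" for i j
    by (simp add: Y_def)
  from feas have sym: "transpose X = X" and ps: "psd X" and nn: "\<forall>i j. 0 \<le> X $ i $ j"
    and tr: "trace X = t" and row: "X *v ones_vec = t *\<^sub>R diag_vec X"
    unfolding Q_feasible_def by auto
  have symij: "X$j$i = X$i$j" for i j
    using sym by (metis transpose_def vec_lambda_beta)
  have rowi: "(\<Sum>j\<in>UNIV. X$i$j) = t * X$i$i" for i
  proof -
    have "(X *v ones_vec)$i = (t *\<^sub>R diag_vec X)$i" using row by simp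
    thus ?thesis by (simp add: matrix_vector_mult_def ones_vec_def diag_vec_def)
  qed
  have symY: "transpose Y = Y"
    by (simp add: transpose_def vec_eq_iff Yij symij)
  have nnY: "\<forall>i j. 0 \<le> Y $ i $ j"
    using nn l0 m0 by (simp add: Yij)
  have quad: "x \<bullet> (Y *v x) = l * (x \<bullet> (X *v x)) + (\<Sum>i\<in>UNIV. m * X$i$i * (x$i)^2)" for x
  proof -
    have "x \<bullet> (Y *v x) = (\<Sum>i\<in>UNIV. x$i * (\<Sum>j\<in>UNIV. (l * X$i$j + (if i = j then m * X$i$i else 0)) * x$j))"
      by (simp add: inner_vec_def matrix_vector_mult_def Yij)
    also have "\<dots> = (\<Sum>i\<in>UNIV. l * (x$i * (\<Sum>j\<in>UNIV. X$i$j * x$j)) + m * X$i$i * (x$i)^2)"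
      by (intro sum.cong refl) (simp add: algebra_simps sum.distrib sum_distrib_left power2_eq_square mult_if0 cong: if_cong)
    also have "\<dots> = l * (x \<bullet> (X *v x)) + (\<Sum>i\<in>UNIV. m * X$i$i * (x$i)^2)"
      by (simp add: sum.distrib sum_distrib_left inner_vec_def matrix_vector_mult_def)
    finally show ?thesis .
  qed
  have psdY: "psd Y"
    unfolding psd_def
  proof (intro conjI allI)
    show "transpose Y = Y" by (rule symY)
    fix x :: "real^'n"
    have "0 \<le> x \<bullet> (X *v x)" using ps unfolding psd_def by auto
    moreover have "0 \<le> (\<Sum>i\<in>UNIV. m * X$i$i * (x$i)^2)"
      using nn m0 by (intro sum_nonneg) auto
    ultimately show "0 \<le> x \<bullet> (Y *v x)" unfolding quad using l0 by simp
  qed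
  have trY: "trace Y = t'"
  proof -
    have "trace Y = (\<Sum>i\<in>UNIV. (l + m) * X$i$i)"
      by (simp add: trace_def Yij algebra_simps)
    also have "\<dots> = (l + m) * t" using tr by (simp add: trace_def sum_distrib_left[symmetric])
    finally show ?thesis using lm tp by simp
  qed
  have rowY: "Y *v ones_vec = t' *\<^sub>R diag_vec Y"
  proof -
    have "(\<Sum>j\<in>UNIV. Y$i$j) = t' * Y$i$i" for i
    proof -
      have "(\<Sum>j\<in>UNIV. Y$i$j) = l * (\<Sum>j\<in>UNIV. X$i$j) + m * X$i$i"
        unfolding Yij sum.distrib by (simp add: sum_distrib_left)
      also have "\<dots> = (l * t + m) * X$i$i" using rowi by (simp add: algebra_simps)
      also have "\<dots> = t' * Y$i$i" unfolding lm2 by (simp add: Yij algebra_simps)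
      finally show ?thesis .
    qed
    thus ?thesis by (simp add: vec_eq_iff matrix_vector_mult_def ones_vec_def diag_vec_def)
  qed
  have "Q_feasible t' Y" unfolding Q_feasible_def using symY psdY nnY trY rowY by auto
  moreover have "frob (adj_matrix E) Y = l * frob (adj_matrix E) X"
  proof -
    have irr: "\<not> E i i" for i using sg unfolding simple_graph_def by auto
    have pt: "(if E i j then 1 else 0) * Y$i$j = l * ((if E i j then 1 else 0) * X$i$j)" for i j
      using irr[of i] by (cases "i = j") (auto simp: Yij)
    show ?thesis unfolding frob_eq adj_matrix_def
      by (simp add: pt sum_distrib_left)
  qed
  ultimately show ?thesis by blast
qed

lemma feasible_exists:
  assumes "1 \<le> t" "t \<le> real CARD('n::finite)" "1 < real CARD('n)"
  shows "\<exists>X::real^'n^'n. Q_feasible t X"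
proof -
  define n where "n = real CARD('n)"
  define a where "a = t * (t - 1) / (n * (n - 1))"
  define b where "b = t * (n - t) / (n * (n - 1))"
  have n1: "n > 1" using assms n_def by simp
  have a0: "0 \<le> a" unfolding a_def using assms n1 by (intro divide_nonneg_pos) auto
  have b0: "0 \<le> b" unfolding b_def using assms n1 n_def by (intro divide_nonneg_pos) auto
  have nz: "n * (n - 1) \<noteq> 0" using n1 by simp
  have abs: "a + b = t / n"
  proof -
    have "a + b = (t * (t - 1) + t * (n - t)) / (n * (n - 1))"
      unfolding a_def b_def by (simp add: add_divide_distrib)
    also have "t * (t - 1) + t * (n - t) = t * (n - 1)" by (simp add: algebra_simps)
    finally show ?thesis using n1 by simp
  qed
  have ab: "n * (a + b) = t" unfolding abs using n1 by simp
  have ab2: "n * a + b = t * (a + b)"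
  proof -
    have "n * a + b = (n * (t * (t - 1)) + t * (n - t)) / (n * (n - 1))"
      unfolding a_def b_def by (simp add: add_divide_distrib)
    also have "n * (t * (t - 1)) + t * (n - t) = (t * t / n) * (n * (n - 1))"
      using n1 by (simp add: field_simps)
    finally have "n * a + b = t * t / n" using nz by simp
    thus ?thesis unfolding abs by simp
  qed
  define X :: "real^'n^'n" where "X = (\<chi> i j. a + (if i = j then b else 0))"
  have Xij: "X$i$j = a + (if i = j then b else 0)" for i j by (simp add: X_def)
  have symX: "transpose X = X" by (simp add: transpose_def vec_eq_iff Xij)
  have inner: "(\<Sum>n\<in>UNIV. X$i$n * x$n) = a * (\<Sum>n\<in>UNIV. x$n) + b * x$i" for i and x :: "real^'n"
  proof -
    have "(\<Sum>n\<in>UNIV. X$i$n * x$n) = (\<Sum>n\<in>UNIV. a * x$n + (if i = n then b * x$n else 0))"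
      by (intro sum.cong refl) (simp add: Xij distrib_right)
    also have "\<dots> = a * (\<Sum>n\<in>UNIV. x$n) + b * x$i"
      by (simp add: sum.distrib sum_distrib_left)
    finally show ?thesis .
  qed
  have quad: "x \<bullet> (X *v x) = a * (\<Sum>i\<in>UNIV. x$i)^2 + b * (\<Sum>i\<in>UNIV. (x$i)^2)" for x :: "real^'n"
  proof -
    have "x \<bullet> (X *v x) = (\<Sum>i\<in>UNIV. x$i * (\<Sum>n\<in>UNIV. X$i$n * x$n))"
      by (simp add: inner_vec_def matrix_vector_mult_def)
    also have "\<dots> = (\<Sum>i\<in>UNIV. a * (\<Sum>n\<in>UNIV. x$n) * x$i + b * (x$i)^2)"
      by (intro sum.cong refl) (simp only: inner, simp add: algebra_simps power2_eq_square)
    also have "\<dots> = a * (\<Sum>i\<in>UNIV. x$i)^2 + b * (\<Sum>i\<in>UNIV. (x$i)^2)"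
      by (simp add: sum.distrib sum_distrib_left[symmetric] power2_eq_square)
    finally show ?thesis .
  qed
  have psdX: "psd X" unfolding psd_def
  proof (intro conjI allI)
    show "transpose X = X" by (rule symX)
    fix x :: "real^'n"
    show "0 \<le> x \<bullet> (X *v x)" unfolding quad using a0 b0
      by (intro add_nonneg_nonneg mult_nonneg_nonneg sum_nonneg) auto
  qed
  have trX: "trace X = t" using ab by (simp add: trace_def Xij n_def)
  have rowX: "X *v ones_vec = t *\<^sub>R diag_vec X"
    using ab2 by (simp add: vec_eq_iff matrix_vector_mult_def ones_vec_def diag_vec_def Xij
        sum.distrib n_def)
  have "Q_feasible t X" unfolding Q_feasible_def using symX psdX trX rowX a0 b0
    by (auto simp: Xij)
  thus ?thesis by blast
qed

theorem mainTheorem10: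
  fixes E :: "'n::finite \<Rightarrow> 'n \<Rightarrow> bool"
  assumes "simple_graph E"
  shows "(\<forall>t' t. 1 \<le> t' \<and> t' < t \<and> t \<le> real CARD('n) \<longrightarrow> S_val E t' \<le> S_val E t)
       \<and> (\<forall>t' t. 1 \<le> t' \<and> t' < t \<and> t \<le> real CARD('n) \<and> 0 < S_val E t' \<longrightarrow> S_val E t' < S_val E t)"
proof -
  have key: "S_val E t' \<le> l * frob (adj_matrix E) X / 2 \<and> 0 \<le> frob (adj_matrix E) X / 2"
    if h: "1 \<le> t'" "t' < t" "Q_feasible t X" "l = t' * (t' - 1) / (t * (t - 1))"
    for t' t l and X :: "real^'n^'n"
  proof -
    obtain Y where Y: "Q_feasible t' Y" "frob (adj_matrix E) Y = l * frob (adj_matrix E) X"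
      using shrink[OF assms h(3,1,2)] h(4) by blast
    have "S_val E t' \<le> frob (adj_matrix E) Y / 2"
      unfolding S_val_def
    proof (rule cInf_lower)
      show "frob (adj_matrix E) Y / 2 \<in> {frob (adj_matrix E) X / 2 |X. Q_feasible t' X}"
        using Y by blast
      show "bdd_below {frob (adj_matrix E) X / 2 |X. Q_feasible t' X}"
      proof (rule bdd_belowI[where m=0])
        fix v assume "v \<in> {frob (adj_matrix E) X / 2 |X. Q_feasible t' X}"
        then obtain Z where "Q_feasible t' Z" "v = frob (adj_matrix E) Z / 2" by blast
        thus "0 \<le> v" using frob_adj_nonneg[of Z E] by (simp add: Q_feasible_def)
      qed
    qed
    moreover have "0 \<le> frob (adj_matrix E) X / 2"
      using h(3) by (auto simp: Q_feasible_def intro!: frob_adj_nonneg)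
    ultimately show ?thesis using Y by simp
  qed
  have ne: "{frob (adj_matrix E) X / 2 |X. Q_feasible t X} \<noteq> {}"
    if hh: "1 \<le> t'" "t' < t" "t \<le> real CARD('n)" for t' t
  proof -
    obtain X :: "real^'n^'n" where "Q_feasible t X"
    proof -
      have "1 \<le> t" "t \<le> real CARD('n)" "1 < real CARD('n)" using hh by auto
      from feasible_exists[OF this] show ?thesis using that by blast
    qed
    thus ?thesis by blast
  qed
  have lprop: "0 \<le> t' * (t' - 1) / (t * (t - 1)) \<and> t' * (t' - 1) / (t * (t - 1)) < 1"
    if "1 \<le> t'" "t' < t" for t' t :: real
  proof -
    have "t' * (t' - 1) < t * (t - 1)" using that by (intro mult_strict_mono') auto
    thus ?thesis using that by (auto simp: field_simps intro!: divide_nonneg_pos)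
  qed
  show ?thesis
  proof (intro conjI allI impI)
    fix t' t assume h: "1 \<le> t' \<and> t' < t \<and> t \<le> real CARD('n)"
    define l where "l = t' * (t' - 1) / (t * (t - 1))"
    have l: "0 \<le> l" "l < 1" using lprop h l_def by auto
    show "S_val E t' \<le> S_val E t"
      unfolding S_val_def[of E t]
    proof (rule cInf_greatest)
      show "{frob (adj_matrix E) X / 2 |X. Q_feasible t X} \<noteq> {}" using ne h by blast
      fix v assume "v \<in> {frob (adj_matrix E) X / 2 |X. Q_feasible t X}"
      then obtain X where X: "Q_feasible t X" "v = frob (adj_matrix E) X / 2" by blast
      from key[OF _ _ X(1) l_def] h have "S_val E t' \<le> l * frob (adj_matrix E) X / 2"
        "0 \<le> frob (adj_matrix E) X / 2" by auto
      moreover have "l * frob (adj_matrix E) X / 2 \<le> frob (adj_matrix E) X / 2"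
        using l calculation(2) by (simp add: mult_left_le_one_le)
      ultimately show "S_val E t' \<le> v" using X by simp
    qed
  next
    fix t' t assume h: "1 \<le> t' \<and> t' < t \<and> t \<le> real CARD('n) \<and> 0 < S_val E t'"
    define l where "l = t' * (t' - 1) / (t * (t - 1))"
    have l: "0 \<le> l" "l < 1" using lprop h l_def by auto
    have lb: "S_val E t' \<le> l * v" if "v \<in> {frob (adj_matrix E) X / 2 |X. Q_feasible t X}" for v
    proof -
      from that obtain X where X: "Q_feasible t X" "v = frob (adj_matrix E) X / 2" by blast
      from key[OF _ _ X(1) l_def] h have "S_val E t' \<le> l * frob (adj_matrix E) X / 2" by auto
      moreover have "l * v = l * frob (adj_matrix E) X / 2" using X(2) by simp
      ultimately show ?thesis by linarith
    qed
    have nE: "{frob (adj_matrix E) X / 2 |X. Q_feasible t X} \<noteq> {}" using ne h by blast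
    then obtain v0 where v0: "v0 \<in> {frob (adj_matrix E) X / 2 |X. Q_feasible t X}" by blast
    have lpos: "l > 0"
    proof (rule ccontr)
      assume "\<not> l > 0" hence "l = 0" using l by simp
      thus False using lb[OF v0] h by simp
    qed
    have "S_val E t' / l \<le> S_val E t"
      unfolding S_val_def[of E t]
    proof (rule cInf_greatest[OF nE])
      fix v assume "v \<in> {frob (adj_matrix E) X / 2 |X. Q_feasible t X}"
      hence "S_val E t' \<le> l * v" by (rule lb)
      thus "S_val E t' / l \<le> v" using lpos by (simp add: divide_le_eq mult.commute)
    qed
    moreover have "S_val E t' < S_val E t' / l" using h lpos l by (simp add: less_divide_eq)
    ultimately show "S_val E t' < S_val E t" by simp
  qed
qed

end
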